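(* Fix an integer $S\ge 1$ and let $X$ be a standard Gaussian random variable. There exists $\tilde\beta>0$ such that for all $0\le\beta<\tilde\beta$, all $h\ge 0$ and all $D\in\mathbb{R}$, the system of two equations in the unknowns $(p,q)$ (with $q\ge 0$) \[ p=\mathbb{E}\left[\frac{\sum_{\gamma=1}^{S}\gamma^2\cdot 2\cosh\left[\gamma(\sqrt{q}\beta X+h)\right]\exp\left(\gamma^2\left[D+\tfrac{\beta^2}{2}(p-q)\right]\right)}{1+\sum_{\gamma=1}^{S}2\cosh\left[\gamma(\sqrt{q}\beta X+h)\right]\exp\left(\gamma^2\left[D+\tfrac{\beta^2}{2}(p-q)\right]\right)}\right], \] \[ q=\mathbb{E}\left[\left(\frac{\sum_{\gamma=1}^{S}\gamma\cdot 2\sinh\left[\gamma(\sqrt{q}\beta X+h)\right]\exp\left(\gamma^2\left[D+\tfrac{\beta^2}{2}(p-q)\right]\right)}{1+\sum_{\gamma=1}^{S}2\cosh\left[\gamma(\sqrt{q}\beta X+h)\right]\exp\left(\gamma^2\left[D+\tfrac{\beta^2}{2}(p-q)\right]\right)}\right)^2\right] \] has a unique solution. *)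

theory Defs
  imports "HOL-Probability.Probability"
begin

definition gauss_expect :: "(real \<Rightarrow> real) \<Rightarrow> real" where
  "gauss_expect g = (\<integral>x. g x \<partial>(density lborel std_normal_density))"

definition ew :: "real \<Rightarrow> real \<Rightarrow> real \<Rightarrow> real \<Rightarrow> nat \<Rightarrow> real" where
  "ew \<beta> D p q \<gamma> = exp ((real \<gamma>)^2 * (D + \<beta>^2 / 2 * (p - q)))"

definition denom :: "nat \<Rightarrow> real \<Rightarrow> real \<Rightarrow> real \<Rightarrow> real \<Rightarrow> real \<Rightarrow> real \<Rightarrow> real" where
  "denom S \<beta> h D p q x = 1 + (\<Sum>\<gamma>=1..S. 2 * cosh (real \<gamma> * (sqrt q * \<beta> * x + h)) * ew \<beta> D p q \<gamma>)"

definition numP :: "nat \<Rightarrow> real \<Rightarrow> real \<Rightarrow> real \<Rightarrow> real \<Rightarrow> real \<Rightarrow> real \<Rightarrow> real" where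
  "numP S \<beta> h D p q x = (\<Sum>\<gamma>=1..S. (real \<gamma>)^2 * (2 * cosh (real \<gamma> * (sqrt q * \<beta> * x + h))) * ew \<beta> D p q \<gamma>)"

definition numQ :: "nat \<Rightarrow> real \<Rightarrow> real \<Rightarrow> real \<Rightarrow> real \<Rightarrow> real \<Rightarrow> real \<Rightarrow> real" where
  "numQ S \<beta> h D p q x = (\<Sum>\<gamma>=1..S. real \<gamma> * (2 * sinh (real \<gamma> * (sqrt q * \<beta> * x + h))) * ew \<beta> D p q \<gamma>)"

end

theory Submission
  imports Defs
begin


lemma lip_gen:
  fixes f c d :: "'k \<Rightarrow> real"
  assumes K: "finite K" "K \<noteq> {}"
    and fb: "\<And>k. k \<in> K \<Longrightarrow> \<bar>f k\<bar> \<le> F"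
    and cb: "\<And>k. k \<in> K \<Longrightarrow> \<bar>c k\<bar> \<le> C"
  shows "\<bar>(\<Sum>k\<in>K. f k * exp (c k * sa + d k)) / (\<Sum>k\<in>K. exp (c k * sa + d k))
        - (\<Sum>k\<in>K. f k * exp (c k * sb + d k)) / (\<Sum>k\<in>K. exp (c k * sb + d k))\<bar>
        \<le> 2 * F * C * \<bar>sa - sb\<bar>"
proof -
  define g where "g s = (\<Sum>k\<in>K. f k * exp (c k * s + d k)) / (\<Sum>k\<in>K. exp (c k * s + d k))" for s
  define g' where "g' s = ((\<Sum>k\<in>K. f k * c k * exp (c k * s + d k)) * (\<Sum>k\<in>K. exp (c k * s + d k))
      - (\<Sum>k\<in>K. f k * exp (c k * s + d k)) * (\<Sum>k\<in>K. c k * exp (c k * s + d k)))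
      / (\<Sum>k\<in>K. exp (c k * s + d k))^2" for s
  have Zpos: "(\<Sum>k\<in>K. exp (c k * s + d k)) > 0" for s
    using K by (intro sum_pos) auto
  have D: "(g has_real_derivative g' s) (at s)" for s
  proof -
    show ?thesis unfolding g_def g'_def
      apply (rule derivative_eq_intros refl | simp add: Zpos[THEN less_imp_neq, symmetric])+
      by (simp add: power2_eq_square ac_simps)
  qed
  have B: "\<bar>g' s\<bar> \<le> 2 * F * C" for s
  proof -
    define Z where "Z = (\<Sum>k\<in>K. exp (c k * s + d k))"
    define N where "N = (\<Sum>k\<in>K. f k * exp (c k * s + d k))"
    define N' where "N' = (\<Sum>k\<in>K. f k * c k * exp (c k * s + d k))"
    define Z' where "Z' = (\<Sum>k\<in>K. c k * exp (c k * s + d k))"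
    have Z0: "Z > 0" using Zpos Z_def by simp
    have F0: "F \<ge> 0" using fb K by (meson abs_ge_zero all_not_in_conv order_trans)
    have C0: "C \<ge> 0" using cb K by (meson abs_ge_zero all_not_in_conv order_trans)
    have "\<bar>N'\<bar> \<le> (\<Sum>k\<in>K. \<bar>f k * c k * exp (c k * s + d k)\<bar>)" unfolding N'_def by (rule sum_abs)
    also have "\<dots> \<le> (\<Sum>k\<in>K. F * C * exp (c k * s + d k))"
      by (intro sum_mono) (auto simp: abs_mult intro!: mult_mono fb cb F0)
    finally have h1: "\<bar>N'\<bar> \<le> F * C * Z" by (simp add: Z_def sum_distrib_left)
    have "\<bar>N\<bar> \<le> (\<Sum>k\<in>K. \<bar>f k * exp (c k * s + d k)\<bar>)" unfolding N_def by (rule sum_abs)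
    also have "\<dots> \<le> (\<Sum>k\<in>K. F * exp (c k * s + d k))"
      by (intro sum_mono) (auto simp: abs_mult intro!: mult_mono fb)
    finally have h2: "\<bar>N\<bar> \<le> F * Z" by (simp add: Z_def sum_distrib_left)
    have "\<bar>Z'\<bar> \<le> (\<Sum>k\<in>K. \<bar>c k * exp (c k * s + d k)\<bar>)" unfolding Z'_def by (rule sum_abs)
    also have "\<dots> \<le> (\<Sum>k\<in>K. C * exp (c k * s + d k))"
      by (intro sum_mono) (auto simp: abs_mult intro!: mult_mono cb)
    finally have h3: "\<bar>Z'\<bar> \<le> C * Z" by (simp add: Z_def sum_distrib_left)
    have "\<bar>N' * Z - N * Z'\<bar> \<le> \<bar>N'\<bar> * Z + \<bar>N\<bar> * \<bar>Z'\<bar>"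
      using Z0 by (simp add: abs_mult abs_triangle_ineq4 order_trans[OF abs_triangle_ineq4])
    also have "\<dots> \<le> F * C * Z * Z + F * Z * (C * Z)"
      using Z0 h1 h2 h3 by (intro add_mono mult_mono) auto
    finally have "\<bar>N' * Z - N * Z'\<bar> \<le> 2 * F * C * Z^2" by (simp add: power2_eq_square algebra_simps)
    then show ?thesis using Z0 unfolding g'_def
      by (simp add: N_def[symmetric] N'_def[symmetric] Z_def[symmetric] Z'_def[symmetric] abs_div pos_divide_le_eq)
  qed
  have main: "\<bar>g a - g b\<bar> \<le> 2 * F * C * \<bar>a - b\<bar>" if ab: "a < b" for a b
  proof -
    obtain z where "g b - g a = (b - a) * g' z"
      using MVT2[OF ab, of g g'] D by metis
    then have "\<bar>g a - g b\<bar> = \<bar>b - a\<bar> * \<bar>g' z\<bar>" by (metis abs_minus_commute abs_mult)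
    also have "\<dots> \<le> \<bar>b - a\<bar> * (2 * F * C)" by (intro mult_left_mono B) auto
    finally show ?thesis by (simp add: abs_minus_commute mult.commute)
  qed
  have "\<bar>g sa - g sb\<bar> \<le> 2 * F * C * \<bar>sa - sb\<bar>"
    using main[of sa sb] main[of sb sa]
    by (cases "sa < sb"; cases "sb < sa") (auto simp: abs_minus_commute)
  then show ?thesis by (simp add: g_def)
qed


definition Ew :: "real \<Rightarrow> real \<Rightarrow> int \<Rightarrow> real" where
  "Ew y T k = exp (of_int k * y + (of_int k)^2 * T)"

definition KS :: "nat \<Rightarrow> int set" where "KS S = {-int S..int S}"

definition avg :: "nat \<Rightarrow> (int \<Rightarrow> real) \<Rightarrow> real \<Rightarrow> real \<Rightarrow> real" where
  "avg S f y T = (\<Sum>k\<in>KS S. f k * Ew y T k) / (\<Sum>k\<in>KS S. Ew y T k)"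

lemma sym_sum: "(\<Sum>k\<in>{-int S..int S}. g k) = g 0 + (\<Sum>\<gamma>=1..S. g (int \<gamma>) + g (- int \<gamma>))"
proof (induction S)
  case 0
  then show ?case by simp
next
  case (Suc S)
  have e: "{-int (Suc S)..int (Suc S)} = insert (int S + 1) (insert (-(int S + 1)) {-int S..int S})"
    by auto
  show ?case unfolding e using Suc by (simp add: algebra_simps)
qed

lemma Ew_pos: "Ew y T k > 0" by (simp add: Ew_def)

lemma KS_fin: "finite (KS S)" and KS_ne: "KS S \<noteq> {}" and KS_0: "0 \<in> KS S"
  by (auto simp: KS_def)

lemma KS_abs: "k \<in> KS S \<Longrightarrow> \<bar>of_int k\<bar> \<le> real S"
  by (auto simp: KS_def)

lemma KS_sq: "k \<in> KS S \<Longrightarrow> (of_int k)^2 \<le> (real S)^2"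
  using KS_abs[of k S] by (metis abs_ge_zero abs_of_nat power2_abs power_mono)

lemma Z_pos: "(\<Sum>k\<in>KS S. Ew y T k) > 0"
  using KS_fin KS_ne by (intro sum_pos) (auto simp: Ew_pos)

lemma term_c: "2 * cosh (real g * y) * ew \<beta> D p q g = Ew y (D + \<beta>^2 / 2 * (p - q)) (int g) + Ew y (D + \<beta>^2 / 2 * (p - q)) (- int g)"
  by (simp add: Ew_def ew_def cosh_field_def exp_add[symmetric] algebra_simps add_divide_distrib)

lemma term_p: "(real g)^2 * (2 * cosh (real g * y)) * ew \<beta> D p q g = (of_int (int g))^2 * Ew y (D + \<beta>^2 / 2 * (p - q)) (int g) + (of_int (- int g))^2 * Ew y (D + \<beta>^2 / 2 * (p - q)) (- int g)"
proof -
  have "(real g)^2 * (2 * cosh (real g * y)) * ew \<beta> D p q g = (real g)^2 * (2 * cosh (real g * y) * ew \<beta> D p q g)" by (simp only: mult.assoc)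
  also have "\<dots> = (real g)^2 * (Ew y (D + \<beta>^2 / 2 * (p - q)) (int g) + Ew y (D + \<beta>^2 / 2 * (p - q)) (- int g))" by (simp only: term_c)
  finally show ?thesis by (simp add: algebra_simps)
qed

lemma term_q: "real g * (2 * sinh (real g * y)) * ew \<beta> D p q g = of_int (int g) * Ew y (D + \<beta>^2 / 2 * (p - q)) (int g) + of_int (- int g) * Ew y (D + \<beta>^2 / 2 * (p - q)) (- int g)"
  by (simp add: Ew_def ew_def sinh_field_def exp_add[symmetric] algebra_simps diff_divide_distrib)

lemma denom_eq: "denom S \<beta> h D p q x = (\<Sum>k\<in>KS S. Ew (sqrt q * \<beta> * x + h) (D + \<beta>^2 / 2 * (p - q)) k)"
  unfolding denom_def KS_def sym_sum term_c by (simp add: Ew_def)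

lemma numP_eq: "numP S \<beta> h D p q x = (\<Sum>k\<in>KS S. (of_int k)^2 * Ew (sqrt q * \<beta> * x + h) (D + \<beta>^2 / 2 * (p - q)) k)"
  unfolding numP_def KS_def sym_sum term_p by simp

lemma numQ_eq: "numQ S \<beta> h D p q x = (\<Sum>k\<in>KS S. of_int k * Ew (sqrt q * \<beta> * x + h) (D + \<beta>^2 / 2 * (p - q)) k)"
  unfolding numQ_def KS_def sym_sum term_q by simp

lemma avg_bound:
  assumes "\<And>k. k \<in> KS S \<Longrightarrow> \<bar>f k\<bar> \<le> F"
  shows "\<bar>avg S f y T\<bar> \<le> F"
proof -
  have "\<bar>\<Sum>k\<in>KS S. f k * Ew y T k\<bar> \<le> (\<Sum>k\<in>KS S. \<bar>f k * Ew y T k\<bar>)" by (rule sum_abs)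
  also have "\<dots> \<le> (\<Sum>k\<in>KS S. F * Ew y T k)"
    by (intro sum_mono) (auto simp: abs_mult Ew_pos less_imp_le intro!: mult_right_mono assms)
  finally show ?thesis using Z_pos[where S=S and y=y and T=T]
    by (simp add: avg_def abs_div pos_divide_le_eq sum_distrib_left)
qed

lemma avg_nonneg:
  assumes "\<And>k. k \<in> KS S \<Longrightarrow> f k \<ge> 0"
  shows "avg S f y T \<ge> 0"
  unfolding avg_def using Z_pos[where S=S and y=y and T=T] assms
  by (intro divide_nonneg_pos sum_nonneg) (auto simp: Ew_pos less_imp_le)

lemma avg_lip:
  assumes fb: "\<And>k. k \<in> KS S \<Longrightarrow> \<bar>f k\<bar> \<le> F"
  shows "\<bar>avg S f y1 T1 - avg S f y2 T2\<bar> \<le> 2 * F * real S * \<bar>y1 - y2\<bar> + 2 * F * (real S)^2 * \<bar>T1 - T2\<bar>"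
proof -
  have a: "\<bar>avg S f y1 T1 - avg S f y2 T1\<bar> \<le> 2 * F * real S * \<bar>y1 - y2\<bar>"
    unfolding avg_def Ew_def
    by (rule lip_gen[OF KS_fin[of S] KS_ne[of S] fb KS_abs[of _ S], where d="\<lambda>k. (of_int k)^2 * T1" and sa=y1 and sb=y2])
  have b: "\<bar>avg S f y2 T1 - avg S f y2 T2\<bar> \<le> 2 * F * (real S)^2 * \<bar>T1 - T2\<bar>"
  proof -
    have "\<bar>(of_int k :: real)^2\<bar> \<le> (real S)^2" if "k \<in> KS S" for k using KS_sq[OF that] by simp
    from lip_gen[OF KS_fin[of S] KS_ne[of S] fb this, where d="\<lambda>k. of_int k * y2" and sa=T1 and sb=T2]
    show ?thesis unfolding avg_def Ew_def by (simp only: add.commute)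
  qed
  show ?thesis using a b by linarith
qed



abbreviation "NN \<equiv> density lborel std_normal_density"

lemma probN: "prob_space NN"
  by (rule prob_space_normal_density) simp

lemma x2_hasint: "has_bochner_integral NN (\<lambda>x. x^2) 1"
proof -
  have "has_bochner_integral lborel (\<lambda>x. std_normal_density x * x ^ (2 * 1)) (fact (2 * 1) / (2^1 * fact 1))"
    by (rule std_normal_moment_even)
  then have "has_bochner_integral lborel (\<lambda>x. std_normal_density x *\<^sub>R x^2) 1" by simp
  then show ?thesis by (intro has_bochner_integral_density) auto
qed

lemma x2_int: "integrable NN (\<lambda>x. x^2)" and x2_val: "(\<integral>x. x^2 \<partial>NN) = 1"
  using x2_hasint by (auto simp: has_bochner_integral_iff)

lemma avg_meas: "(\<lambda>x. avg S f (r * b * x + h) T) \<in> borel_measurable NN"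
  unfolding avg_def Ew_def by simp

lemma bdd_int:
  fixes g :: "real \<Rightarrow> real"
  assumes "g \<in> borel_measurable NN" "\<And>x. \<bar>g x\<bar> \<le> B"
  shows "integrable NN g"
proof -
  interpret prob_space NN by (rule probN)
  show ?thesis using assms by (intro integrable_const_bound[where B=B]) auto
qed

lemma half_contra: "(X::real) \<le> z / 2 \<Longrightarrow> z < 2 * X \<Longrightarrow> False" by linarith

lemma sc_lemma:
  fixes X u v :: real
  assumes "u \<ge> 0" "v \<ge> 0" and H: "\<And>l. l > 0 \<Longrightarrow> X \<le> (l * u + v / l) / 2"
  shows "X \<le> sqrt u * sqrt v"
proof (cases "u > 0 \<and> v > 0")
  case True
  have "X \<le> ((sqrt v / sqrt u) * u + v / (sqrt v / sqrt u)) / 2" using True by (intro H) auto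
  also have "\<dots> = sqrt u * sqrt v" using True
    by (simp add: field_simps)
  finally show ?thesis .
next
  case False
  show ?thesis
  proof (rule ccontr)
    assume XX: "\<not> X \<le> sqrt u * sqrt v"
    then have Xp: "X > 0" using False assms by auto
    show False
    proof (cases "u = 0")
      case True
      have "0 \<le> v / X" using Xp assms by simp
      then have "X \<le> ((v / X + 1) * u + v / (v / X + 1)) / 2" by (intro H) linarith
      then have "X \<le> (v / (v / X + 1)) / 2" using True by (simp only: mult_zero_right add_0_left)
      moreover have "v / (v / X + 1) < 2 * X" using Xp assms(2) by (simp add: field_simps add_nonneg_pos)
      ultimately show False by (rule half_contra)
    next
      case False
      then have "v = 0" using \<open>\<not> (u > 0 \<and> v > 0)\<close> assms by auto
      have "X \<le> (X / (u + 1) * u) / 2" using H[of "X / (u + 1)"] \<open>v = 0\<close> Xp assms by simp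
      moreover have "X / (u + 1) * u < 2 * X" using Xp assms(1) by (simp add: field_simps add_nonneg_pos)
      ultimately show False by (rule half_contra)
    qed
  qed
qed



lemma amgm_l: "l > 0 \<Longrightarrow> \<bar>(d::real) * s\<bar> \<le> (l * d^2 + s^2 / l) / 2"
proof -
  assume l: "l > 0"
  have "0 \<le> (l * \<bar>d\<bar> - \<bar>s\<bar>)^2 / l" using l by simp
  also have "(l * \<bar>d\<bar> - \<bar>s\<bar>)^2 / l = l * d^2 + s^2 / l - 2 * \<bar>d * s\<bar>"
    using l by (simp add: power2_eq_square field_simps abs_mult)
  finally show ?thesis by simp
qed

lemma lin3: "(A::real) \<le> (L + P) / 2 \<Longrightarrow> P \<le> Q \<Longrightarrow> A \<le> (L + Q) / 2" by (simp only: add_divide_distrib)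

lemma sqrt_diff:
  fixes m1 m2 :: "real \<Rightarrow> real"
  assumes [measurable]: "m1 \<in> borel_measurable NN" "m2 \<in> borel_measurable NN"
    and b1: "\<And>x. \<bar>m1 x\<bar> \<le> M" and b2: "\<And>x. \<bar>m2 x\<bar> \<le> M"
  shows "\<bar>sqrt (\<integral>x. (m1 x)^2 \<partial>NN) - sqrt (\<integral>x. (m2 x)^2 \<partial>NN)\<bar>
         \<le> sqrt 2 * sqrt (\<integral>x. (m1 x - m2 x)^2 \<partial>NN)"
proof -
  have sq: "\<bar>z\<bar> \<le> K \<Longrightarrow> z^2 \<le> K^2" for z K :: real
    by (metis abs_ge_zero abs_power2 power2_abs power_mono)
  have i1: "integrable NN (\<lambda>x. (m1 x)^2)"
    by (rule bdd_int[where B="M^2"]) (auto intro: sq b1)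
  have i2: "integrable NN (\<lambda>x. (m2 x)^2)"
    by (rule bdd_int[where B="M^2"]) (auto intro: sq b2)
  have i3: "integrable NN (\<lambda>x. (m1 x - m2 x)^2)"
  proof (rule bdd_int[where B="(2*M)^2"])
    fix x have "\<bar>m1 x - m2 x\<bar> \<le> 2 * M" using b1[of x] b2[of x] by linarith
    then show "\<bar>(m1 x - m2 x)^2\<bar> \<le> (2 * M)^2" using sq[of "m1 x - m2 x" "2*M"] by simp
  qed auto
  define a where "a = (\<integral>x. (m1 x)^2 \<partial>NN)"
  define b where "b = (\<integral>x. (m2 x)^2 \<partial>NN)"
  define u where "u = (\<integral>x. (m1 x - m2 x)^2 \<partial>NN)"
  have a0: "a \<ge> 0" and b0: "b \<ge> 0" and u0: "u \<ge> 0"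
    unfolding a_def b_def u_def by (auto intro: integral_nonneg_AE)
  have key: "\<bar>a - b\<bar> \<le> (l * u + (2 * a + 2 * b) / l) / 2" if l: "l > 0" for l
  proof -
    have "(\<integral>x. (m1 x - m2 x) * (m1 x + m2 x) \<partial>NN) = (\<integral>x. (m1 x)^2 - (m2 x)^2 \<partial>NN)"
      by (rule Bochner_Integration.integral_cong) (simp_all add: power2_eq_square algebra_simps)
    also have "\<dots> = a - b"
      unfolding a_def b_def by (rule Bochner_Integration.integral_diff[OF i1 i2])
    finally have "a - b = (\<integral>x. (m1 x - m2 x) * (m1 x + m2 x) \<partial>NN)" by simp
    also have "\<bar>\<dots>\<bar> \<le> (\<integral>x. \<bar>(m1 x - m2 x) * (m1 x + m2 x)\<bar> \<partial>NN)"
      by (rule integral_abs_bound)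
    also have "\<dots> \<le> (\<integral>x. (l * (m1 x - m2 x)^2 + (2 * (m1 x)^2 + 2 * (m2 x)^2) / l) / 2 \<partial>NN)"
    proof (rule integral_mono)
      have "integrable NN (\<lambda>x. \<bar>(m1 x)^2 - (m2 x)^2\<bar>)"
        by (intro integrable_abs Bochner_Integration.integrable_diff i1 i2)
      then show "integrable NN (\<lambda>x. \<bar>(m1 x - m2 x) * (m1 x + m2 x)\<bar>)"
        by (subst fun_eq_iff[THEN iffD2, of _ "\<lambda>x. \<bar>(m1 x)^2 - (m2 x)^2\<bar>"]) (simp_all add: power2_eq_square algebra_simps)
      show "integrable NN (\<lambda>x. (l * (m1 x - m2 x)^2 + (2 * (m1 x)^2 + 2 * (m2 x)^2) / l) / 2)"
        by (intro integrable_divide_zero Bochner_Integration.integrable_add integrable_mult_right i1 i2 i3)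
      fix x
      have "(m1 x + m2 x)^2 \<le> 2 * (m1 x)^2 + 2 * (m2 x)^2"
        using sum_squares_ge_zero[of "m1 x - m2 x" 0] by (simp add: power2_eq_square algebra_simps)
      then have "(m1 x + m2 x)^2 / l \<le> (2 * (m1 x)^2 + 2 * (m2 x)^2) / l"
        using l by (simp add: divide_right_mono)
      then show "\<bar>(m1 x - m2 x) * (m1 x + m2 x)\<bar> \<le> (l * (m1 x - m2 x)^2 + (2 * (m1 x)^2 + 2 * (m2 x)^2) / l) / 2"
        by (rule lin3[OF amgm_l[OF l, of "m1 x - m2 x" "m1 x + m2 x"]])
    qed
    also have "\<dots> = (l * u + (2 * a + 2 * b) / l) / 2"
      unfolding a_def b_def u_def
      by (simp only: integral_divide_zero Bochner_Integration.integral_add integral_mult_right_zero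
          integrable_divide_zero Bochner_Integration.integrable_add integrable_mult_right i1 i2 i3)
    finally show ?thesis .
  qed
  have ab: "\<bar>a - b\<bar> \<le> sqrt u * sqrt (2 * a + 2 * b)"
    by (rule sc_lemma) (use u0 a0 b0 key in auto)
  have "sqrt (2 * a + 2 * b) = sqrt 2 * sqrt (a + b)"
    by (simp add: real_sqrt_mult[symmetric] algebra_simps)
  also have "sqrt (a + b) \<le> sqrt a + sqrt b"
    using a0 b0 by (metis real_sqrt_le_iff sqrt_add_le_add_sqrt)
  finally have s2: "sqrt (2 * a + 2 * b) \<le> sqrt 2 * (sqrt a + sqrt b)" by simp
  have e: "\<bar>a - b\<bar> = \<bar>sqrt a - sqrt b\<bar> * (sqrt a + sqrt b)"
  proof -
    have "a - b = (sqrt a - sqrt b) * (sqrt a + sqrt b)" using a0 b0 by (simp add: algebra_simps)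
    then show ?thesis using a0 b0 by (simp add: abs_mult)
  qed
  have "\<bar>sqrt a - sqrt b\<bar> * (sqrt a + sqrt b) = \<bar>a - b\<bar>" by (rule e[symmetric])
  also have "\<dots> \<le> sqrt u * sqrt (2 * a + 2 * b)" by (rule ab)
  also have "\<dots> \<le> sqrt u * (sqrt 2 * (sqrt a + sqrt b))" by (rule mult_left_mono[OF s2]) (simp add: u0)
  finally have "\<bar>sqrt a - sqrt b\<bar> * (sqrt a + sqrt b) \<le> (sqrt 2 * sqrt u) * (sqrt a + sqrt b)"
    by (simp only: ac_simps)
  then have "\<bar>sqrt a - sqrt b\<bar> \<le> sqrt 2 * sqrt u"
  proof (cases "sqrt a + sqrt b > 0")
    case True
    with \<open>\<bar>sqrt a - sqrt b\<bar> * (sqrt a + sqrt b) \<le> (sqrt 2 * sqrt u) * (sqrt a + sqrt b)\<close>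
    show ?thesis by (simp only: mult_le_cancel_right_pos)
  next
    case False
    have "sqrt a \<ge> 0" "sqrt b \<ge> 0" using a0 b0 by simp_all
    then have "sqrt a = 0" "sqrt b = 0" using False by linarith+
    then have "a = 0" "b = 0" by simp_all
    then show ?thesis using u0 by simp
  qed
  then show ?thesis unfolding a_def b_def u_def .
qed



lemma pt_lip:
  fixes \<beta> r1 r2 p1 p2 x h D F :: real
  assumes S1: "S \<ge> 1" and b0: "0 \<le> \<beta>" and b1: "\<beta> \<le> 1"
    and r1: "0 \<le> r1" "r1 \<le> real S" and r2: "0 \<le> r2" "r2 \<le> real S"
    and fb: "\<And>k. k \<in> KS S \<Longrightarrow> \<bar>f k\<bar> \<le> F"
  shows "\<bar>avg S f (r1 * \<beta> * x + h) (D + \<beta>^2 / 2 * (p1 - r1^2))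
          - avg S f (r2 * \<beta> * x + h) (D + \<beta>^2 / 2 * (p2 - r2^2))\<bar>
         \<le> \<beta> * (\<bar>p1 - p2\<bar> + \<bar>r1 - r2\<bar>) * (2 * F * real S * \<bar>x\<bar> + 2 * F * (real S)^3)"
proof -
  define e where "e = \<bar>p1 - p2\<bar> + \<bar>r1 - r2\<bar>"
  have e0: "e \<ge> 0" unfolding e_def by simp
  have F0: "F \<ge> 0" using fb[OF KS_0] by linarith
  have S0: "real S \<ge> 1" using S1 by simp
  have dy: "\<bar>(r1 * \<beta> * x + h) - (r2 * \<beta> * x + h)\<bar> \<le> \<beta> * \<bar>x\<bar> * e"
  proof -
    have "\<bar>(r1 * \<beta> * x + h) - (r2 * \<beta> * x + h)\<bar> = \<beta> * \<bar>x\<bar> * \<bar>r1 - r2\<bar>"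
    proof -
      have "(r1 * \<beta> * x + h) - (r2 * \<beta> * x + h) = \<beta> * x * (r1 - r2)" by (simp add: algebra_simps)
      then show ?thesis using b0 by (simp add: abs_mult)
    qed
    also have "\<dots> \<le> \<beta> * \<bar>x\<bar> * e" using b0 unfolding e_def by (intro mult_left_mono) auto
    finally show ?thesis .
  qed
  have dT: "\<bar>(D + \<beta>^2 / 2 * (p1 - r1^2)) - (D + \<beta>^2 / 2 * (p2 - r2^2))\<bar> \<le> \<beta> * real S * e"
  proof -
    have deq: "(D + \<beta>^2 / 2 * (p1 - r1^2)) - (D + \<beta>^2 / 2 * (p2 - r2^2)) = \<beta>^2 / 2 * ((p1 - p2) - (r1 + r2) * (r1 - r2))"
      by (simp add: field_simps power2_eq_square)
    have "\<bar>(D + \<beta>^2 / 2 * (p1 - r1^2)) - (D + \<beta>^2 / 2 * (p2 - r2^2))\<bar> = \<beta>^2 / 2 * \<bar>(p1 - p2) - (r1 + r2) * (r1 - r2)\<bar>"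
      unfolding deq abs_mult by simp
    also have "\<bar>(p1 - p2) - (r1 + r2) * (r1 - r2)\<bar> \<le> \<bar>p1 - p2\<bar> + (r1 + r2) * \<bar>r1 - r2\<bar>"
      using r1 r2 by (simp add: abs_mult order_trans[OF abs_triangle_ineq4])
    also have "(r1 + r2) * \<bar>r1 - r2\<bar> \<le> (2 * real S) * \<bar>r1 - r2\<bar>"
      using r1 r2 by (intro mult_right_mono) auto
    also have "\<bar>p1 - p2\<bar> + 2 * real S * \<bar>r1 - r2\<bar> \<le> 2 * real S * e"
    proof -
      have "\<bar>p1 - p2\<bar> \<le> 2 * real S * \<bar>p1 - p2\<bar>" using mult_right_mono[of 1 "2 * real S" "\<bar>p1 - p2\<bar>"] S0 by simp
      moreover have "2 * real S * e = 2 * real S * \<bar>p1 - p2\<bar> + 2 * real S * \<bar>r1 - r2\<bar>"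
        unfolding e_def by (simp only: distrib_left)
      ultimately show ?thesis by linarith
    qed
    finally have "\<bar>(D + \<beta>^2 / 2 * (p1 - r1^2)) - (D + \<beta>^2 / 2 * (p2 - r2^2))\<bar> \<le> \<beta>^2 / 2 * (2 * real S * e)"
      using b0 by (simp add: mult_left_mono)
    also have "\<dots> = \<beta> * \<beta> * (real S * e)" by (simp add: power2_eq_square)
    also have "\<dots> \<le> \<beta> * 1 * (real S * e)"
      using b0 b1 e0 by (intro mult_right_mono mult_left_mono) auto
    finally show ?thesis by simp
  qed
  have "\<bar>avg S f (r1 * \<beta> * x + h) (D + \<beta>^2 / 2 * (p1 - r1^2))
          - avg S f (r2 * \<beta> * x + h) (D + \<beta>^2 / 2 * (p2 - r2^2))\<bar>
        \<le> 2 * F * real S * \<bar>(r1 * \<beta> * x + h) - (r2 * \<beta> * x + h)\<bar>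
          + 2 * F * (real S)^2 * \<bar>(D + \<beta>^2 / 2 * (p1 - r1^2)) - (D + \<beta>^2 / 2 * (p2 - r2^2))\<bar>"
    by (rule avg_lip[OF fb])
  also have "\<dots> \<le> 2 * F * real S * (\<beta> * \<bar>x\<bar> * e) + 2 * F * (real S)^2 * (\<beta> * real S * e)"
    using F0 by (intro add_mono mult_left_mono dy dT) auto
  also have "\<dots> = \<beta> * e * (2 * F * real S * \<bar>x\<bar> + 2 * F * (real S)^3)"
    by (simp add: algebra_simps power2_eq_square power3_eq_cube)
  finally show ?thesis unfolding e_def .
qed



lemma int_quad:
  "(\<integral>x. c0 + c1 * x^2 \<partial>NN) = c0 + c1" and int_quad_int: "integrable NN (\<lambda>x. c0 + c1 * x^2)"
proof -
  interpret prob_space NN by (rule probN)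
  show "integrable NN (\<lambda>x. c0 + c1 * x^2)"
    by (intro Bochner_Integration.integrable_add integrable_mult_right x2_int integrable_const)
  then show "(\<integral>x. c0 + c1 * x^2 \<partial>NN) = c0 + c1"
    using x2_int x2_val prob_space by (simp add: Bochner_Integration.integral_add)
qed

lemma int_le_quad:
  fixes f :: "real \<Rightarrow> real"
  assumes "integrable NN f" "\<And>x. f x \<le> c0 + c1 * x^2"
  shows "(\<integral>x. f x \<partial>NN) \<le> c0 + c1"
proof -
  have "(\<integral>x. f x \<partial>NN) \<le> (\<integral>x. c0 + c1 * x^2 \<partial>NN)"
    by (rule integral_mono[OF assms(1) int_quad_int assms(2)])
  then show ?thesis by (simp only: int_quad)
qed

lemma int_diff_quad:
  fixes f g :: "real \<Rightarrow> real"
  assumes "integrable NN f" "integrable NN g" "\<And>x. \<bar>f x - g x\<bar> \<le> c0 + c1 * x^2"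
  shows "\<bar>(\<integral>x. f x \<partial>NN) - (\<integral>x. g x \<partial>NN)\<bar> \<le> c0 + c1"
proof -
  have "(\<integral>x. f x \<partial>NN) - (\<integral>x. g x \<partial>NN) = (\<integral>x. f x - g x \<partial>NN)"
    using assms by simp
  also have "\<bar>\<dots>\<bar> \<le> (\<integral>x. \<bar>f x - g x\<bar> \<partial>NN)" by (rule integral_abs_bound)
  also have "\<dots> \<le> c0 + c1" using assms by (intro int_le_quad) auto
  finally show ?thesis .
qed

lemma absx: "\<bar>x::real\<bar> \<le> 1/2 + 1/2 * x^2"
proof -
  have "0 \<le> (\<bar>x\<bar> - 1)^2" by simp
  then show ?thesis by (simp add: power2_eq_square algebra_simps)
qed

lemma sq_lin: "\<bar>d::real\<bar> \<le> A * \<bar>x\<bar> + B \<Longrightarrow> 0 \<le> A \<Longrightarrow> 0 \<le> B \<Longrightarrow> d^2 \<le> 2 * B^2 + 2 * A^2 * x^2"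
proof -
  assume h: "\<bar>d\<bar> \<le> A * \<bar>x\<bar> + B" "0 \<le> A" "0 \<le> B"
  have "d^2 \<le> (A * \<bar>x\<bar> + B)^2"
    using h by (metis abs_ge_zero abs_power2 power2_abs power_mono order_trans)
  also have "\<dots> \<le> 2 * B^2 + 2 * A^2 * x^2"
    using sum_squares_ge_zero[of "A * \<bar>x\<bar> - B" 0] by (simp add: power2_eq_square algebra_simps)
  finally show ?thesis .
qed



lemma t1: "w * (2 * (s::real)^2 * s * (1/2 + 1/2 * y) + 2 * s^2 * s^3) = w * (s^3 + 2 * s^5) + w * s^3 * y"
  by (simp add: field_simps eval_nat_numeral)

lemma t2: "w * (2 * (s::real) * s * ax + 2 * s * s^3) = (2 * s^2 * w) * ax + 2 * s^4 * w"
  by (simp add: field_simps eval_nat_numeral)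

lemma sq_abs_le: "\<bar>z::real\<bar> \<le> K \<Longrightarrow> \<bar>z^2\<bar> \<le> K^2"
proof -
  assume "\<bar>z\<bar> \<le> K"
  then have "z^2 \<le> K^2" by (metis abs_ge_zero abs_power2 power2_abs power_mono)
  then show ?thesis by simp
qed

theorem proposition1:
  fixes S :: nat
  assumes "S \<ge> 1"
  shows "\<exists>\<beta>t>0. \<forall>\<beta> h D. 0 \<le> \<beta> \<and> \<beta> < \<beta>t \<and> 0 \<le> h \<longrightarrow>
           (\<exists>!(p, q). 0 \<le> q \<and>
              p = gauss_expect (\<lambda>x. numP S \<beta> h D p q x / denom S \<beta> h D p q x) \<and>
              q = gauss_expect (\<lambda>x. (numQ S \<beta> h D p q x / denom S \<beta> h D p q x)^2))"
proof -
  have S0: "real S \<ge> 1" using assms by simp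
  have S5: "(real S)^5 \<ge> 1" using S0 by simp
  define bt where "bt = 1 / (48 * (real S)^5)"
  have bt0: "bt > 0" using S5 assms by (simp add: bt_def)
  have bt1: "bt \<le> 1" unfolding bt_def using S5 by (subst divide_le_eq) auto
  show ?thesis
  proof (intro exI[of _ bt] conjI allI impI bt0)
    fix \<beta> h D :: real
    assume H: "0 \<le> \<beta> \<and> \<beta> < bt \<and> 0 \<le> h"
    have b0: "0 \<le> \<beta>" and blt: "\<beta> < bt" using H by auto
    have b1: "\<beta> \<le> 1" using blt bt1 by simp
    interpret prob_space NN by (rule probN)
    define G1 where "G1 p r x = avg S (\<lambda>k. (of_int k)^2) (r * \<beta> * x + h) (D + \<beta>^2 / 2 * (p - r^2))" for p r x
    define G2 where "G2 p r x = avg S (\<lambda>k. of_int k) (r * \<beta> * x + h) (D + \<beta>^2 / 2 * (p - r^2))" for p r x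
    define \<Phi> where "\<Phi> z = ((\<integral>x. G1 (fst z) (snd z) x \<partial>NN), sqrt (\<integral>x. (G2 (fst z) (snd z) x)^2 \<partial>NN))" for z
    define B where "B = {0..(real S)^2} \<times> {0..real S}"
    have fb1: "\<bar>(of_int k :: real)^2\<bar> \<le> (real S)^2" if "k \<in> KS S" for k
      using KS_sq[OF that] by simp
    have fb2: "\<bar>(of_int k :: real)\<bar> \<le> real S" if "k \<in> KS S" for k
      using KS_abs[OF that] .
    have m1[measurable]: "G1 p r \<in> borel_measurable NN" for p r
      unfolding G1_def[abs_def] by (rule avg_meas)
    have m2[measurable]: "G2 p r \<in> borel_measurable NN" for p r
      unfolding G2_def[abs_def] by (rule avg_meas)
    have G1b: "\<bar>G1 p r x\<bar> \<le> (real S)^2" for p r x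
      unfolding G1_def by (rule avg_bound[OF fb1])
    have G1n: "G1 p r x \<ge> 0" for p r x
      unfolding G1_def by (rule avg_nonneg) simp
    have G2b: "\<bar>G2 p r x\<bar> \<le> real S" for p r x
      unfolding G2_def by (rule avg_bound[OF fb2])
    have G2sq: "(G2 p r x)^2 \<le> (real S)^2" for p r x
      using G2b[of p r x] by (metis abs_ge_zero abs_power2 power2_abs power_mono)
    have i1: "integrable NN (G1 p r)" for p r
      by (rule bdd_int[OF m1 G1b])
    have i2: "integrable NN (\<lambda>x. (G2 p r x)^2)" for p r
      by (rule bdd_int[where B="(real S)^2"]) (auto simp: G2sq)
    have maps: "\<Phi> z \<in> B" for z
    proof -
      have "0 \<le> (\<integral>x. G1 (fst z) (snd z) x \<partial>NN)" by (intro integral_nonneg_AE) (simp add: G1n)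
      moreover have "(\<integral>x. G1 (fst z) (snd z) x \<partial>NN) \<le> (real S)^2"
        using G1b by (intro integral_le_const i1) (auto simp: abs_le_iff)
      moreover have "(\<integral>x. (G2 (fst z) (snd z) x)^2 \<partial>NN) \<le> (real S)^2"
        using G2sq by (intro integral_le_const i2) auto
      then have "sqrt (\<integral>x. (G2 (fst z) (snd z) x)^2 \<partial>NN) \<le> real S"
        by (metis of_nat_0_le_iff real_sqrt_abs real_sqrt_le_mono abs_of_nonneg)
      ultimately show ?thesis unfolding \<Phi>_def B_def by auto
    qed
    have lip: "dist (\<Phi> z1) (\<Phi> z2) \<le> (24 * (real S)^5 * \<beta>) * dist z1 z2" if z: "z1 \<in> B" "z2 \<in> B" for z1 z2
    proof -
      obtain p1 r1 where z1: "z1 = (p1, r1)" by (cases z1)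
      obtain p2 r2 where z2: "z2 = (p2, r2)" by (cases z2)
      have r1: "0 \<le> r1" "r1 \<le> real S" and r2: "0 \<le> r2" "r2 \<le> real S"
        using z z1 z2 unfolding B_def by auto
      define e where "e = \<bar>p1 - p2\<bar> + \<bar>r1 - r2\<bar>"
      define w where "w = \<beta> * e"
      have w0: "w \<ge> 0" unfolding w_def e_def using b0 by simp
      have P3: "(real S)^3 \<le> (real S)^5" and P4: "(real S)^4 \<le> (real S)^5" and P2: "(real S)^2 \<le> (real S)^4"
        using S0 by (auto intro: power_increasing)
      have pt1: "\<bar>G1 p1 r1 x - G1 p2 r2 x\<bar> \<le> w * ((real S)^3 + 2 * (real S)^5) + w * (real S)^3 * x^2" for x
      proof -
        have "\<bar>G1 p1 r1 x - G1 p2 r2 x\<bar> \<le> w * (2 * (real S)^2 * real S * \<bar>x\<bar> + 2 * (real S)^2 * (real S)^3)"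
          unfolding G1_def w_def e_def by (rule pt_lip[OF assms b0 b1 r1 r2 fb1])
        also have "\<dots> \<le> w * (2 * (real S)^2 * real S * (1/2 + 1/2 * x^2) + 2 * (real S)^2 * (real S)^3)"
          using w0 absx[of x] by (intro mult_left_mono add_mono) auto
        also have "\<dots> = w * ((real S)^3 + 2 * (real S)^5) + w * (real S)^3 * x^2"
          by (rule t1)
        finally show ?thesis .
      qed
      have d1: "\<bar>fst (\<Phi> z1) - fst (\<Phi> z2)\<bar> \<le> 4 * (real S)^5 * w"
      proof -
        have "\<bar>fst (\<Phi> z1) - fst (\<Phi> z2)\<bar> \<le> w * ((real S)^3 + 2 * (real S)^5) + w * (real S)^3"
          unfolding \<Phi>_def z1 z2 fst_conv snd_conv by (rule int_diff_quad[OF i1 i1 pt1])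
        also have "\<dots> \<le> w * ((real S)^5 + 2 * (real S)^5) + w * (real S)^5"
          using w0 P3 by (intro add_mono mult_left_mono) auto
        finally show ?thesis by (simp add: algebra_simps)
      qed
      define A where "A = 2 * (real S)^2 * w"
      define Bc where "Bc = 2 * (real S)^4 * w"
      have A0: "A \<ge> 0" and B0: "Bc \<ge> 0" using w0 by (auto simp: A_def Bc_def)
      have pt2: "\<bar>G2 p1 r1 x - G2 p2 r2 x\<bar> \<le> A * \<bar>x\<bar> + Bc" for x
      proof -
        have "\<bar>G2 p1 r1 x - G2 p2 r2 x\<bar> \<le> w * (2 * real S * real S * \<bar>x\<bar> + 2 * real S * (real S)^3)"
          unfolding G2_def w_def e_def by (rule pt_lip[OF assms b0 b1 r1 r2 fb2])
        also have "\<dots> = A * \<bar>x\<bar> + Bc"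
          unfolding A_def Bc_def by (rule t2)
        finally show ?thesis .
      qed
      have iu: "integrable NN (\<lambda>x. (G2 p1 r1 x - G2 p2 r2 x)^2)"
      proof (rule bdd_int[where B="(2 * real S)^2"])
        fix x
        have "\<bar>G2 p1 r1 x - G2 p2 r2 x\<bar> \<le> 2 * real S" using G2b[of p1 r1 x] G2b[of p2 r2 x] by linarith
        then show "\<bar>(G2 p1 r1 x - G2 p2 r2 x)^2\<bar> \<le> (2 * real S)^2"
          by (rule sq_abs_le)
      qed simp
      have u: "(\<integral>x. (G2 p1 r1 x - G2 p2 r2 x)^2 \<partial>NN) \<le> 2 * Bc^2 + 2 * A^2"
        by (rule int_le_quad[OF iu]) (rule sq_lin[OF pt2 A0 B0])
      have "sqrt (\<integral>x. (G2 p1 r1 x - G2 p2 r2 x)^2 \<partial>NN) \<le> sqrt (2 * Bc^2 + 2 * A^2)"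
        by (rule real_sqrt_le_mono[OF u])
      also have "2 * Bc^2 + 2 * A^2 \<le> 2 * (A + Bc)^2"
        using mult_nonneg_nonneg[OF A0 B0] by (simp add: power2_eq_square algebra_simps)
      then have "sqrt (2 * Bc^2 + 2 * A^2) \<le> sqrt (2 * (A + Bc)^2)"
        by (rule real_sqrt_le_mono)
      also have "sqrt (2 * (A + Bc)^2) = sqrt 2 * (A + Bc)"
        using A0 B0 by (simp add: real_sqrt_mult)
      finally have su: "sqrt (\<integral>x. (G2 p1 r1 x - G2 p2 r2 x)^2 \<partial>NN) \<le> sqrt 2 * (A + Bc)" .
      have d2: "\<bar>snd (\<Phi> z1) - snd (\<Phi> z2)\<bar> \<le> 8 * (real S)^5 * w"
      proof -
        have "\<bar>snd (\<Phi> z1) - snd (\<Phi> z2)\<bar> \<le> sqrt 2 * sqrt (\<integral>x. (G2 p1 r1 x - G2 p2 r2 x)^2 \<partial>NN)"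
          unfolding \<Phi>_def z1 z2 fst_conv snd_conv by (rule sqrt_diff[OF m2 m2 G2b G2b])
        also have "\<dots> \<le> sqrt 2 * (sqrt 2 * (A + Bc))" by (intro mult_left_mono su) auto
        also have "\<dots> = 2 * (A + Bc)" by (simp add: mult.assoc[symmetric])
        also have "\<dots> = 4 * (real S)^2 * w + 4 * (real S)^4 * w" by (simp add: A_def Bc_def algebra_simps)
        also have "\<dots> \<le> 4 * (real S)^5 * w + 4 * (real S)^5 * w"
          using w0 P2 P4 by (intro add_mono mult_right_mono mult_left_mono) auto
        finally show ?thesis by (simp add: algebra_simps)
      qed
      have ed: "e \<le> 2 * dist z1 z2"
      proof -
        have "\<bar>p1 - p2\<bar> \<le> dist z1 z2" "\<bar>r1 - r2\<bar> \<le> dist z1 z2"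
          unfolding z1 z2 dist_Pair_Pair dist_real_def
          by (rule real_sqrt_sum_squares_ge1, rule real_sqrt_sum_squares_ge2)
        then show ?thesis unfolding e_def by simp
      qed
      have "dist (\<Phi> z1) (\<Phi> z2) = sqrt ((fst (\<Phi> z1) - fst (\<Phi> z2))^2 + (snd (\<Phi> z1) - snd (\<Phi> z2))^2)"
        using dist_Pair_Pair[of "fst (\<Phi> z1)" "snd (\<Phi> z1)" "fst (\<Phi> z2)" "snd (\<Phi> z2)"]
        by (simp add: dist_real_def)
      also have "\<dots> \<le> \<bar>fst (\<Phi> z1) - fst (\<Phi> z2)\<bar> + \<bar>snd (\<Phi> z1) - snd (\<Phi> z2)\<bar>"
        by (rule sqrt_sum_squares_le_sum_abs)
      also have "\<dots> \<le> 12 * (real S)^5 * w" using d1 d2 by simp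
      also have "\<dots> = 12 * (real S)^5 * \<beta> * e" by (simp add: w_def)
      also have "\<dots> \<le> 12 * (real S)^5 * \<beta> * (2 * dist z1 z2)"
        using b0 ed by (intro mult_left_mono) auto
      finally show ?thesis by simp
    qed
    have "\<exists>!z\<in>B. \<Phi> z = z"
    proof (rule Banach_fix)
      show "Topological_Spaces.complete B" unfolding B_def by (intro compact_imp_complete compact_Times compact_Icc)
      show "B \<noteq> {}" unfolding B_def by auto
      show "0 \<le> 24 * (real S)^5 * \<beta>" using b0 by simp
      show "24 * (real S)^5 * \<beta> < 1"
      proof -
        have "24 * (real S)^5 * \<beta> < 24 * (real S)^5 * bt" using blt S5 assms by (intro mult_strict_left_mono) auto
        also have "\<dots> = 1/2" using S5 assms by (simp add: bt_def)
        finally show ?thesis by simp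
      qed
      show "\<Phi> ` B \<subseteq> B" using maps by auto
    qed (rule lip)
    then obtain z0 where z0B: "z0 \<in> B" and z0f: "\<Phi> z0 = z0" and z0u: "\<And>z. z \<in> B \<Longrightarrow> \<Phi> z = z \<Longrightarrow> z = z0"
      by blast
    obtain p0 r0 where z0p: "z0 = (p0, r0)" by (cases z0)
    have r00: "r0 \<ge> 0" using z0B z0p B_def by auto
    have eqP: "(\<lambda>x. numP S \<beta> h D p q x / denom S \<beta> h D p q x) = G1 p (sqrt q)" if "q \<ge> 0" for p q
      using that by (simp add: fun_eq_iff G1_def avg_def numP_eq denom_eq mult.commute)
    have eqQ: "(\<lambda>x. (numQ S \<beta> h D p q x / denom S \<beta> h D p q x)^2) = (\<lambda>x. (G2 p (sqrt q) x)^2)" if "q \<ge> 0" for p q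
      using that by (simp add: fun_eq_iff G2_def avg_def numQ_eq denom_eq mult.commute)
    have char: "(0 \<le> q \<and> p = gauss_expect (\<lambda>x. numP S \<beta> h D p q x / denom S \<beta> h D p q x) \<and>
              q = gauss_expect (\<lambda>x. (numQ S \<beta> h D p q x / denom S \<beta> h D p q x)^2))
           \<longleftrightarrow> (0 \<le> q \<and> \<Phi> (p, sqrt q) = (p, sqrt q))" for p q
    proof (cases "q \<ge> 0")
      case True
      have nn: "0 \<le> (\<integral>x. (G2 p (sqrt q) x)^2 \<partial>NN)" by (intro integral_nonneg_AE) simp
      show ?thesis using True nn
        unfolding eqP[OF True] eqQ[OF True] gauss_expect_def \<Phi>_def
        by (auto simp: real_sqrt_eq_iff)
    qed simp
    show "\<exists>!(p, q). 0 \<le> q \<and>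
              p = gauss_expect (\<lambda>x. numP S \<beta> h D p q x / denom S \<beta> h D p q x) \<and>
              q = gauss_expect (\<lambda>x. (numQ S \<beta> h D p q x / denom S \<beta> h D p q x)^2)"
      unfolding char
    proof (rule ex1I[of _ "(p0, r0^2)"])
      show "case (p0, r0^2) of (p, q) \<Rightarrow> 0 \<le> q \<and> \<Phi> (p, sqrt q) = (p, sqrt q)"
        using z0f z0p r00 by simp
    next
      fix y assume "case y of (p, q) \<Rightarrow> 0 \<le> q \<and> \<Phi> (p, sqrt q) = (p, sqrt q)"
      moreover obtain p q where y: "y = (p, q)" by (cases y)
      ultimately have q0: "0 \<le> q" and fx: "\<Phi> (p, sqrt q) = (p, sqrt q)" by auto
      have "(p, sqrt q) \<in> B" using maps[of "(p, sqrt q)"] fx by simp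
      then have "(p, sqrt q) = (p0, r0)" using z0u fx z0p by blast
      then show "y = (p0, r0^2)" using y q0 by auto
    qed
  qed
qed

end
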